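(* Let $I=[a,b)\subseteq[0,1)$ with $a<b$. (a) For every $x^n\in\{0,1\}^n$, $\bar F_I(x^n)\ge F_I(x^n-1)$. (b) For every $x^n$ that is not the largest element in Gray order, $\bar F_I(x^n)\ge\lfloor F_I(x^n)\rfloor_{\lambda_h(x^n+1)}$. (c) Consequently, for every $x^n$ that is neither the smallest nor the largest element in Gray order, $$\Big[\min\{\bar F_I(x^n-1),F_I(x^n-1)\},\ \min\{\bar F_I(x^n),F_I(x^n)\}\Big)\subseteq\Big[\lfloor F_I(x^n-1)\rfloor_{\lambda_h(x^n)},\ \bar F_I(x^n)\Big).$$
   Context: Let $p$ be a probability distribution on $\{0,1\}$ with $p(0),p(1)\in(0,1)$, $p(0)\ne p(1)$, $\rho=\max\{p(0)/p(1),p(1)/p(0)\}$, and $p(x^n)=\prod_i p(x_i)$. Gray code is $g(x^n)=x^n\oplus(0,x_1,\dots,x_{n-1})$; Gray order $\preceq_G$ on $\{0,1\}^n$ is $x^n\preceq_G y^n$ iff $g^{-1}(x^n)\preceq_L g^{-1}(y^n)$ (lexicographic). $x^n+1$ and $x^n-1$ denote the immediate successor and predecessor in Gray order. $F(x^n)=\sum_{a^n\preceq_G x^n}p(a^n)$, with $F(x^n-1):=0$ if $x^n$ is the smallest element. For an interval $I=[a,b)$: $F_I(x^n)=a+(b-a)F(x^n)$; $\alpha_h:=\rho$; $\lambda_h(x^n)=\lfloor-\log_2(\alpha_h(b-a)p(x^n))\rfloor$ (an integer); $\bar F_I(x^n)=\lfloor F_I(x^n-1)+2^{-\lambda_h(x^n)}\rfloor_{\lambda_h(x^n)}$.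 For real $r\ge0$ and integer $l$, $\lfloor r\rfloor_l=2^{-l}\lfloor 2^lr\rfloor$. *)

theory Defs
  imports Complex_Main
begin

(* Binary strings x^n are bool lists of length n (False = 0, True = 1). *)
definition strings :: "nat \<Rightarrow> bool list set" where
  "strings n = {xs. length xs = n}"

definition gray :: "bool list \<Rightarrow> bool list" where
  "gray xs = map2 (\<noteq>) xs (False # butlast xs)"

definition gray_inv :: "nat \<Rightarrow> bool list \<Rightarrow> bool list" where
  "gray_inv n x = the_inv_into (strings n) gray x"

definition lex_le :: "bool list \<Rightarrow> bool list \<Rightarrow> bool" where
  "lex_le u v \<longleftrightarrow> u = v \<or> (u, v) \<in> lexord {(a, b). a < b}"

definition gray_le :: "nat \<Rightarrow> bool list \<Rightarrow> bool list \<Rightarrow> bool" where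
  "gray_le n x y \<longleftrightarrow> lex_le (gray_inv n x) (gray_inv n y)"

definition gray_less :: "nat \<Rightarrow> bool list \<Rightarrow> bool list \<Rightarrow> bool" where
  "gray_less n x y \<longleftrightarrow> gray_le n x y \<and> x \<noteq> y"

definition gray_smallest :: "nat \<Rightarrow> bool list \<Rightarrow> bool" where
  "gray_smallest n x \<longleftrightarrow> (\<forall>y\<in>strings n. gray_le n x y)"

definition gray_largest :: "nat \<Rightarrow> bool list \<Rightarrow> bool" where
  "gray_largest n x \<longleftrightarrow> (\<forall>y\<in>strings n. gray_le n y x)"

definition gray_succ :: "nat \<Rightarrow> bool list \<Rightarrow> bool list" where
  "gray_succ n x = (THE y. y \<in> strings n \<and> gray_less n x y \<and>
      \<not> (\<exists>z\<in>strings n. gray_less n x z \<and> gray_less n z y))"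

definition gray_pred :: "nat \<Rightarrow> bool list \<Rightarrow> bool list" where
  "gray_pred n x = (THE y. y \<in> strings n \<and> gray_less n y x \<and>
      \<not> (\<exists>z\<in>strings n. gray_less n y z \<and> gray_less n z x))"

definition pstr :: "(bool \<Rightarrow> real) \<Rightarrow> bool list \<Rightarrow> real" where
  "pstr p x = prod_list (map p x)"

definition Fcdf :: "(bool \<Rightarrow> real) \<Rightarrow> nat \<Rightarrow> bool list \<Rightarrow> real" where
  "Fcdf p n x = (\<Sum>a\<in>{a\<in>strings n. gray_le n a x}. pstr p a)"

definition Fprev :: "(bool \<Rightarrow> real) \<Rightarrow> nat \<Rightarrow> bool list \<Rightarrow> real" where
  "Fprev p n x = (if gray_smallest n x then 0 else Fcdf p n (gray_pred n x))"

definition FI :: "real \<Rightarrow> real \<Rightarrow> (bool \<Rightarrow> real) \<Rightarrow> nat \<Rightarrow> bool list \<Rightarrow> real" where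
  "FI a b p n x = a + (b - a) * Fcdf p n x"

definition FIprev :: "real \<Rightarrow> real \<Rightarrow> (bool \<Rightarrow> real) \<Rightarrow> nat \<Rightarrow> bool list \<Rightarrow> real" where
  "FIprev a b p n x = a + (b - a) * Fprev p n x"

definition rho :: "(bool \<Rightarrow> real) \<Rightarrow> real" where
  "rho p = max (p False / p True) (p True / p False)"

(* lambda_h(x^n) with alpha_h = rho *)
definition lam :: "real \<Rightarrow> real \<Rightarrow> (bool \<Rightarrow> real) \<Rightarrow> bool list \<Rightarrow> int" where
  "lam a b p x = \<lfloor>- log 2 (rho p * (b - a) * pstr p x)\<rfloor>"

definition rdown :: "real \<Rightarrow> int \<Rightarrow> real" where
  "rdown r l = 2 powr (- real_of_int l) * real_of_int \<lfloor>2 powr (real_of_int l) * r\<rfloor>"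

definition Fbar :: "real \<Rightarrow> real \<Rightarrow> (bool \<Rightarrow> real) \<Rightarrow> nat \<Rightarrow> bool list \<Rightarrow> real" where
  "Fbar a b p n x = rdown (FIprev a b p n x + 2 powr (- real_of_int (lam a b p x))) (lam a b p x)"

end

theory Submission
  imports Defs
begin

fun val :: "bool list \<Rightarrow> nat" where
  "val [] = 0"
| "val (b # xs) = (if b then 2 ^ length xs else 0) + val xs"

lemma val_lt: "val xs < 2 ^ length xs"
  by (induction xs) auto

lemma lex_val: "length xs = length ys \<Longrightarrow>
   (xs, ys) \<in> lexord {(a, b). a < b} \<longleftrightarrow> val xs < val ys"
proof (induction xs arbitrary: ys)
  case Nil then show ?case by auto
next
  case (Cons x xs)
  then obtain y ys' where ys: "ys = y # ys'" and l: "length xs = length ys'"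
    by (cases ys) auto
  have "val xs < 2 ^ length xs" "val ys' < 2 ^ length xs" using val_lt l by metis+
  then show ?case using Cons.IH[OF l] ys l by (cases x; cases y) auto
qed

lemma val_inj: "length xs = length ys \<Longrightarrow> val xs = val ys \<Longrightarrow> xs = ys"
proof (induction xs arbitrary: ys)
  case Nil then show ?case by auto
next
  case (Cons x xs)
  then obtain y ys' where ys: "ys = y # ys'" and l: "length xs = length ys'"
    by (cases ys) auto
  have "val xs < 2 ^ length xs" "val ys' < 2 ^ length xs" using val_lt l by metis+
  then show ?case using Cons ys l by (cases x; cases y) auto
qed

lemma lex_le_val: "length xs = length ys \<Longrightarrow> lex_le xs ys \<longleftrightarrow> val xs \<le> val ys"
  unfolding lex_le_def using lex_val val_inj by (metis le_eq_less_or_eq)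

lemma finite_strings: "finite (strings n)"
  unfolding strings_def using finite_lists_length_eq[of "UNIV :: bool set" n] by simp

lemma card_strings: "card (strings n) = 2 ^ n"
  unfolding strings_def using card_lists_length_eq[of "UNIV :: bool set" n] by simp

lemma val_image: "val ` strings n = {..<2^n}"
proof -
  have inj: "inj_on val (strings n)" unfolding inj_on_def strings_def using val_inj by auto
  have sub: "val ` strings n \<subseteq> {..<2^n}" unfolding strings_def using val_lt by auto
  have "card (val ` strings n) = 2 ^ n" using card_image[OF inj] card_strings by simp
  then show ?thesis using sub by (simp add: card_subset_eq)
qed

definition flip1 :: "bool \<Rightarrow> bool list \<Rightarrow> bool list" where
  "flip1 b xs = (case xs of [] \<Rightarrow> [] | c # cs \<Rightarrow> (c \<noteq> b) # cs)"

lemma gray_Nil[simp]: "gray [] = []" by (simp add: gray_def)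

lemma gray_Cons: "gray (b # us) = b # flip1 b (gray us)"
  by (cases us) (auto simp: gray_def flip1_def)

lemma length_gray[simp]: "length (gray xs) = length xs"
  by (simp add: gray_def)

lemma length_flip1[simp]: "length (flip1 b xs) = length xs"
  by (cases xs) (auto simp: flip1_def)

lemma flip1_inj: "flip1 b xs = flip1 b ys \<Longrightarrow> xs = ys"
  by (cases xs; cases ys) (auto simp: flip1_def)

lemma gray_inj: "inj gray"
proof -
  have "gray xs = gray ys \<Longrightarrow> xs = ys" for xs ys
  proof (induction xs arbitrary: ys)
    case Nil then show ?case by (metis length_0_conv length_gray)
  next
    case (Cons x xs)
    then obtain y ys' where ys: "ys = y # ys'"
      by (metis length_Suc_conv length_gray)
    then show ?case using Cons by (auto simp: gray_Cons dest: flip1_inj)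
  qed
  then show ?thesis by (rule injI)
qed

lemma gray_bij: "bij_betw gray (strings n) (strings n)"
proof -
  have inj: "inj_on gray (strings n)" using gray_inj by (simp add: inj_on_def inj_def)
  have sub: "gray ` strings n \<subseteq> strings n" by (auto simp: strings_def)
  have "card (gray ` strings n) = card (strings n)" using card_image[OF inj] by simp
  then have "gray ` strings n = strings n" using sub finite_strings by (simp add: card_subset_eq)
  then show ?thesis using inj by (simp add: bij_betw_def)
qed

lemma gray_inv_gray: "u \<in> strings n \<Longrightarrow> gray_inv n (gray u) = u"
  unfolding gray_inv_def using gray_bij
  by (metis bij_betw_def the_inv_into_f_f)

lemma gray_gray_inv: "x \<in> strings n \<Longrightarrow> gray (gray_inv n x) = x"
  unfolding gray_inv_def using gray_bij
  by (metis bij_betw_def f_the_inv_into_f)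

lemma gray_inv_in: "x \<in> strings n \<Longrightarrow> gray_inv n x \<in> strings n"
  unfolding gray_inv_def using gray_bij
  by (metis bij_betw_def the_inv_into_into order_refl)

definition key :: "nat \<Rightarrow> bool list \<Rightarrow> nat" where
  "key n x = val (gray_inv n x)"

lemma key_lt: "x \<in> strings n \<Longrightarrow> key n x < 2 ^ n"
proof -
  assume "x \<in> strings n"
  then have "length (gray_inv n x) = n" using gray_inv_in[of x n] by (simp add: strings_def)
  then show ?thesis unfolding key_def using val_lt by metis
qed

lemma key_inj: assumes "x \<in> strings n" "y \<in> strings n" "key n x = key n y" shows "x = y"
proof -
  have "length (gray_inv n x) = length (gray_inv n y)"
    using gray_inv_in[OF assms(1)] gray_inv_in[OF assms(2)] by (simp add: strings_def)
  then have "gray_inv n x = gray_inv n y" using val_inj assms(3) unfolding key_def by blast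
  then show ?thesis using gray_gray_inv assms by metis
qed

lemma key_surj: "k < 2 ^ n \<Longrightarrow> \<exists>x\<in>strings n. key n x = k"
proof -
  assume "k < 2 ^ n"
  then obtain u where u: "u \<in> strings n" "val u = k" using val_image
    by (metis imageE lessThan_iff)
  then show ?thesis using gray_inv_gray unfolding key_def
    by (metis gray_bij bij_betwE)
qed

lemma gray_le_key: "x \<in> strings n \<Longrightarrow> y \<in> strings n \<Longrightarrow> gray_le n x y \<longleftrightarrow> key n x \<le> key n y"
proof -
  assume a: "x \<in> strings n" "y \<in> strings n"
  have "length (gray_inv n x) = length (gray_inv n y)"
    using gray_inv_in[OF a(1)] gray_inv_in[OF a(2)] by (simp add: strings_def)
  then show ?thesis unfolding gray_le_def key_def using lex_le_val by blast
qed

lemma gray_less_key: "x \<in> strings n \<Longrightarrow> y \<in> strings n \<Longrightarrow> gray_less n x y \<longleftrightarrow> key n x < key n y"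
  unfolding gray_less_def using gray_le_key key_inj by (metis nat_less_le)

lemma smallest_key: assumes x: "x \<in> strings n" shows "gray_smallest n x \<longleftrightarrow> key n x = 0"
proof
  assume "gray_smallest n x"
  moreover obtain y where "y \<in> strings n" "key n y = 0" using key_surj[of 0 n] by auto
  ultimately show "key n x = 0" unfolding gray_smallest_def using gray_le_key x by fastforce
next
  assume "key n x = 0"
  then show "gray_smallest n x" unfolding gray_smallest_def using gray_le_key x by auto
qed

lemma largest_key: assumes x: "x \<in> strings n" shows "gray_largest n x \<longleftrightarrow> key n x = 2 ^ n - 1"
proof
  assume "gray_largest n x"
  moreover obtain y where "y \<in> strings n" "key n y = 2 ^ n - 1" using key_surj[of "2^n-1" n] by auto
  ultimately show "key n x = 2 ^ n - 1" unfolding gray_largest_def using gray_le_key x key_lt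
    by (metis One_nat_def Suc_pred le_antisym less_Suc_eq_le zero_less_numeral zero_less_power)
next
  assume "key n x = 2 ^ n - 1"
  then show "gray_largest n x" unfolding gray_largest_def using gray_le_key x key_lt
    by (metis One_nat_def Suc_pred less_Suc_eq_le zero_less_numeral zero_less_power)
qed

lemma succ_key: assumes "x \<in> strings n" "\<not> gray_largest n x"
  shows "gray_succ n x \<in> strings n \<and> key n (gray_succ n x) = key n x + 1"
proof -
  have "key n x + 1 < 2 ^ n" using assms largest_key key_lt by fastforce
  then obtain y where y: "y \<in> strings n" "key n y = key n x + 1" using key_surj by blast
  have "gray_succ n x = y" unfolding gray_succ_def
  proof (rule the_equality)
    show "y \<in> strings n \<and> gray_less n x y \<and> \<not> (\<exists>z\<in>strings n. gray_less n x z \<and> gray_less n z y)"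
      using y assms gray_less_key by auto
  next
    fix y' assume h: "y' \<in> strings n \<and> gray_less n x y' \<and> \<not> (\<exists>z\<in>strings n. gray_less n x z \<and> gray_less n z y')"
    then have "key n x < key n y'" using assms gray_less_key by blast
    moreover have "\<not> key n y < key n y'" using h y assms gray_less_key by auto
    ultimately have "key n y' = key n y" using y by linarith
    then show "y' = y" using key_inj h y by blast
  qed
  then show ?thesis using y by simp
qed

lemma pred_key: assumes "x \<in> strings n" "\<not> gray_smallest n x"
  shows "gray_pred n x \<in> strings n \<and> key n (gray_pred n x) = key n x - 1"
proof -
  have k0: "key n x \<noteq> 0" using assms smallest_key by blast
  have "key n x - 1 < 2 ^ n" using assms key_lt by fastforce
  then obtain y where y: "y \<in> strings n" "key n y = key n x - 1" using key_surj by blast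
  have "gray_pred n x = y" unfolding gray_pred_def
  proof (rule the_equality)
    show "y \<in> strings n \<and> gray_less n y x \<and> \<not> (\<exists>z\<in>strings n. gray_less n y z \<and> gray_less n z x)"
      using y assms gray_less_key k0 by auto
  next
    fix y' assume h: "y' \<in> strings n \<and> gray_less n y' x \<and> \<not> (\<exists>z\<in>strings n. gray_less n y' z \<and> gray_less n z x)"
    then have "key n y' < key n x" using assms gray_less_key by blast
    moreover have "\<not> key n y' < key n y" using h y assms gray_less_key k0 by auto
    ultimately have "key n y' = key n y" using y by linarith
    then show "y' = y" using key_inj h y by blast
  qed
  then show ?thesis using y by simp
qed


definition onebit :: "bool list \<Rightarrow> bool list \<Rightarrow> bool" where
  "onebit xs ys \<longleftrightarrow> (\<exists>i<length xs. ys = xs[i := \<not> xs ! i])"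

lemma onebit_Cons: "onebit xs ys \<Longrightarrow> onebit (b # xs) (b # ys)"
  unfolding onebit_def by (metis Suc_less_eq length_Cons list_update_code(3) nth_Cons_Suc)

lemma onebit_flip1: assumes "onebit xs ys" shows "onebit (flip1 c xs) (flip1 c ys)"
proof -
  obtain i where i: "i < length xs" "ys = xs[i := \<not> xs ! i]" using assms onebit_def by blast
  then obtain x0 rest where xs: "xs = x0 # rest" by (cases xs) auto
  show ?thesis
  proof (cases i)
    case 0
    then show ?thesis using i xs unfolding onebit_def flip1_def
      by (intro exI[of _ 0]) auto
  next
    case (Suc j)
    then show ?thesis using i xs unfolding onebit_def flip1_def
      by (intro exI[of _ i]) auto
  qed
qed

lemma val_zero: "val us = 0 \<Longrightarrow> us = replicate (length us) False"
  by (induction us) (auto split: if_splits)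

lemma val_rep_True: "val (replicate m True) = 2 ^ m - 1"
proof (induction m)
  case 0 then show ?case by simp
next
  case (Suc m)
  have "(1::nat) \<le> 2 ^ m" by simp
  then show ?case using Suc by simp
qed

lemma val_max: "val us = 2 ^ length us - 1 \<Longrightarrow> us = replicate (length us) True"
  using val_inj[of us "replicate (length us) True"] val_rep_True by simp

lemma flip1_False[simp]: "flip1 False xs = xs"
  by (cases xs) (auto simp: flip1_def)

lemma gray_rep_False: "gray (replicate m False) = replicate m False"
  by (induction m) (auto simp: gray_Cons)

lemma gray_rep_True: "gray (replicate (Suc m) True) = True # replicate m False"
proof (induction m)
  case 0 then show ?case by (simp add: gray_Cons flip1_def)
next
  case (Suc m)
  have "gray (replicate (Suc (Suc m)) True) = True # flip1 True (gray (replicate (Suc m) True))"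
    by (simp add: gray_Cons)
  also have "\<dots> = True # replicate (Suc m) False" using Suc by (simp add: flip1_def)
  finally show ?case .
qed

lemma gray_adjacent: "length u = length u' \<Longrightarrow> val u' = Suc (val u) \<Longrightarrow> onebit (gray u) (gray u')"
proof (induction u arbitrary: u')
  case Nil then show ?case by simp
next
  case (Cons x xs)
  then obtain y ys where u': "u' = y # ys" and l: "length xs = length ys"
    by (cases u') auto
  have lt1: "val xs < 2 ^ length xs" and lt2: "val ys < 2 ^ length xs" using val_lt l by metis+
  show ?case
  proof (cases "x = y")
    case True
    then have "val ys = Suc (val xs)" using Cons.prems u' l by (cases x) auto
    then have "onebit (gray xs) (gray ys)" using Cons.IH l by blast
    then show ?thesis using u' True by (simp add: gray_Cons onebit_Cons onebit_flip1)
  next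
    case False
    have xy: "x = False \<and> y = True"
    proof (rule ccontr)
      assume "\<not> (x = False \<and> y = True)"
      then have "x = True" "y = False" using False by auto
      then show False using Cons.prems u' l lt1 lt2 by simp
    qed
    then have e: "2 ^ length xs + val ys = Suc (val xs)" using Cons.prems u' l by simp
    then have "val ys = 0" "val xs = 2 ^ length xs - 1" using lt1 by linarith+
    then have xs: "xs = replicate (length xs) True" and ys: "ys = replicate (length xs) False"
      using val_zero val_max l by metis+
    show ?thesis
    proof (cases "length xs")
      case 0
      then show ?thesis using xy u' xs ys unfolding onebit_def
        by (intro exI[of _ 0]) (auto simp: gray_Cons flip1_def)
    next
      case (Suc k)
      then have "gray xs = True # replicate k False" "gray ys = replicate (Suc k) False"
        using xs ys gray_rep_True gray_rep_False by metis+
      then show ?thesis using xy u' unfolding onebit_def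
        by (intro exI[of _ 0]) (auto simp: gray_Cons flip1_def)
    qed
  qed
qed

lemma prod_update: "i < length xs \<Longrightarrow>
   prod_list (map p (xs[i := v])) * p (xs ! i) = prod_list (map (p :: bool \<Rightarrow> real) xs) * p v"
proof (induction xs arbitrary: i)
  case Nil then show ?case by simp
next
  case (Cons x xs)
  then show ?case by (cases i) (auto simp: mult_ac)
qed

lemma pstr_pos: assumes pos: "p False > 0" "p True > 0" shows "pstr p x > 0"
proof -
  have "\<forall>c. p c > 0" using pos by (metis (full_types))
  then show ?thesis unfolding pstr_def by (induction x) auto
qed

lemma onebit_pstr: assumes pos: "p False > 0" "p True > 0" and ob: "onebit x y"
  shows "pstr p x \<le> rho p * pstr p y"
proof -
  obtain i where i: "i < length x" "y = x[i := \<not> x ! i]" using ob onebit_def by blast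
  define c where "c = x ! i"
  have e: "pstr p y * p c = pstr p x * p (\<not> c)"
    using prod_update[OF i(1), of p "\<not> x ! i"] i unfolding pstr_def c_def by simp
  have pc: "p c > 0" "p (\<not> c) > 0" using pos by (cases c; simp)+
  have r: "p c / p (\<not> c) \<le> rho p" unfolding rho_def by (cases c) auto
  have "pstr p x = pstr p y * (p c / p (\<not> c))" using e pc by (simp add: field_simps)
  also have "\<dots> \<le> pstr p y * rho p"
    using r pstr_pos[OF pos, of y] by (intro mult_left_mono) auto
  finally show ?thesis by (simp add: mult_ac)
qed

lemma succ_onebit: assumes "x \<in> strings n" "\<not> gray_largest n x"
  shows "onebit x (gray_succ n x)"
proof -
  have s: "gray_succ n x \<in> strings n" "key n (gray_succ n x) = key n x + 1" using succ_key assms by auto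
  have "length (gray_inv n x) = length (gray_inv n (gray_succ n x))"
    using gray_inv_in[OF assms(1)] gray_inv_in[OF s(1)] by (simp add: strings_def)
  then have "onebit (gray (gray_inv n x)) (gray (gray_inv n (gray_succ n x)))"
    using gray_adjacent s(2) unfolding key_def by simp
  then show ?thesis using gray_gray_inv assms(1) s(1) by metis
qed

lemma Fcdf_split: assumes x: "x \<in> strings n"
  shows "Fcdf p n x = Fprev p n x + pstr p x"
proof (cases "gray_smallest n x")
  case True
  have k: "key n x = 0" using True smallest_key x by blast
  have "{a\<in>strings n. gray_le n a x} = {x}"
  proof
    show "{a\<in>strings n. gray_le n a x} \<subseteq> {x}"
    proof
      fix a assume "a \<in> {a\<in>strings n. gray_le n a x}"
      then have "a \<in> strings n" "key n a = key n x" using gray_le_key x k by auto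
      then show "a \<in> {x}" using key_inj x by blast
    qed
  next
    show "{x} \<subseteq> {a\<in>strings n. gray_le n a x}" using x gray_le_key by auto
  qed
  then show ?thesis using True unfolding Fcdf_def Fprev_def by simp
next
  case False
  have pr: "gray_pred n x \<in> strings n" "key n (gray_pred n x) = key n x - 1"
    using pred_key x False by auto
  have k0: "key n x \<noteq> 0" using smallest_key x False by blast
  have "{a\<in>strings n. gray_le n a x} = insert x {a\<in>strings n. gray_le n a (gray_pred n x)}"
  proof
    show "{a\<in>strings n. gray_le n a x} \<subseteq> insert x {a\<in>strings n. gray_le n a (gray_pred n x)}"
    proof
      fix a assume "a \<in> {a\<in>strings n. gray_le n a x}"
      then have a: "a \<in> strings n" "key n a \<le> key n x" using gray_le_key x by auto
      show "a \<in> insert x {a\<in>strings n. gray_le n a (gray_pred n x)}"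
      proof (cases "key n a = key n x")
        case True then show ?thesis using key_inj a x by blast
      next
        case False
        then have "key n a \<le> key n (gray_pred n x)" using a pr by linarith
        then show ?thesis using a pr gray_le_key by blast
      qed
    qed
  next
    show "insert x {a\<in>strings n. gray_le n a (gray_pred n x)} \<subseteq> {a\<in>strings n. gray_le n a x}"
    proof
      fix a assume "a \<in> insert x {a\<in>strings n. gray_le n a (gray_pred n x)}"
      then have "a = x \<or> (a \<in> strings n \<and> key n a \<le> key n x - 1)" using gray_le_key pr by auto
      then show "a \<in> {a\<in>strings n. gray_le n a x}" using gray_le_key x by auto
    qed
  qed
  moreover have "x \<notin> {a\<in>strings n. gray_le n a (gray_pred n x)}"
    using x pr k0 gray_le_key by auto
  moreover have "finite {a\<in>strings n. gray_le n a (gray_pred n x)}" using finite_strings by simp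
  ultimately show ?thesis using False unfolding Fcdf_def Fprev_def by simp
qed


lemma p2: "2 powr (- real_of_int l) * 2 powr (real_of_int l) = 1"
  by (simp add: powr_minus field_simps)

lemma rdown_le: "rdown r l \<le> r"
proof -
  have "real_of_int \<lfloor>2 powr real_of_int l * r\<rfloor> \<le> 2 powr real_of_int l * r" by simp
  then have "rdown r l \<le> 2 powr (- real_of_int l) * (2 powr real_of_int l * r)"
    unfolding rdown_def by (intro mult_left_mono) auto
  also have "\<dots> = r" using p2[of l] by (simp add: mult.assoc[symmetric])
  finally show ?thesis .
qed

lemma rdown_gt: "r - 2 powr (- real_of_int l) < rdown r l"
proof -
  have "2 powr real_of_int l * r - 1 < real_of_int \<lfloor>2 powr real_of_int l * r\<rfloor>" by linarith
  then have "2 powr (- real_of_int l) * (2 powr real_of_int l * r - 1) < rdown r l"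
    unfolding rdown_def by (intro mult_strict_left_mono) auto
  moreover have "2 powr (- real_of_int l) * (2 powr real_of_int l * r - 1) = r - 2 powr (- real_of_int l)"
    using p2[of l] by (simp add: algebra_simps mult.assoc[symmetric])
  ultimately show ?thesis by simp
qed

lemma rdown_mono: "r \<le> s \<Longrightarrow> rdown r l \<le> rdown s l"
  unfolding rdown_def by (intro mult_left_mono) (auto intro: floor_mono)

lemma rdown_grid: assumes "s < 2 powr (- real_of_int l) * of_int k + 2 powr (- real_of_int l)"
  shows "rdown s l \<le> 2 powr (- real_of_int l) * of_int k"
proof -
  have "2 powr real_of_int l * s < 2 powr real_of_int l * (2 powr (- real_of_int l) * of_int k + 2 powr (- real_of_int l))"
    using assms by (intro mult_strict_left_mono) auto
  also have "\<dots> = of_int k + 1" using p2[of l] by (simp add: algebra_simps mult.assoc[symmetric])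
  finally have "\<lfloor>2 powr real_of_int l * s\<rfloor> \<le> k" by linarith
  then show ?thesis unfolding rdown_def by (intro mult_left_mono) auto
qed

lemma pow_int_shift: assumes "l \<le> l'"
  shows "2 powr (- real_of_int l) = 2 powr (- real_of_int l') * of_int (2 ^ nat (l' - l))"
proof -
  have "2 powr (- real_of_int l) = 2 powr (- real_of_int l') * 2 powr (real_of_int (l' - l))"
    by (simp add: powr_add[symmetric])
  also have "2 powr (real_of_int (l' - l)) = 2 powr (real (nat (l' - l)))" using assms by simp
  also have "\<dots> = 2 ^ nat (l' - l)" by (simp add: powr_realpow)
  finally show ?thesis by simp
qed

lemma rdown_multiple: assumes "l \<le> l'"
  shows "\<exists>k::int. rdown r l = 2 powr (- real_of_int l') * of_int k"
proof -
  have "rdown r l = 2 powr (- real_of_int l') * of_int (2 ^ nat (l' - l) * \<lfloor>2 powr real_of_int l * r\<rfloor>)"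
    unfolding rdown_def pow_int_shift[OF assms] by simp
  then show ?thesis by blast
qed

lemma rdown_coarse: assumes "l' \<le> l" shows "rdown r l' \<le> rdown r l"
proof -
  obtain k where k: "rdown r l' = 2 powr (- real_of_int l) * of_int k" using rdown_multiple assms by blast
  have "rdown (rdown r l') l \<le> rdown r l" by (rule rdown_mono[OF rdown_le])
  moreover have "rdown (rdown r l') l = rdown r l'"
  proof (rule antisym)
    show "rdown (rdown r l') l \<le> rdown r l'" by (rule rdown_le)
    have "2 powr real_of_int l * rdown r l' = (2 powr (- real_of_int l) * 2 powr real_of_int l) * of_int k"
      unfolding k by (metis mult.assoc mult.commute)
    also have "\<dots> = of_int k" using p2[of l] by simp
    finally have e: "2 powr real_of_int l * rdown r l' = of_int k" .
    have "rdown (rdown r l') l = 2 powr (- real_of_int l) * of_int k"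
      unfolding rdown_def[of "rdown r l'" l] e by simp
    then show "rdown r l' \<le> rdown (rdown r l') l" using k by simp
  qed
  ultimately show ?thesis by simp
qed

lemma lam_bound: assumes "v > 0" shows "v \<le> 2 powr (- real_of_int \<lfloor>- log 2 v\<rfloor>)"
proof -
  have "log 2 v \<le> - real_of_int \<lfloor>- log 2 v\<rfloor>" by linarith
  then have "2 powr log 2 v \<le> 2 powr (- real_of_int \<lfloor>- log 2 v\<rfloor>)" by simp
  then show ?thesis using assms by simp
qed


theorem lemma2:
  fixes p :: "bool \<Rightarrow> real" and a b :: real and n :: nat
  assumes "0 < p False" "p False < 1" "0 < p True" "p True < 1"
    and "p False + p True = 1" and "p False \<noteq> p True"
    and "0 \<le> a" "a < b" "b \<le> 1"
  shows "(\<forall>x\<in>strings n. Fbar a b p n x \<ge> FIprev a b p n x)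
    \<and> (\<forall>x\<in>strings n. \<not> gray_largest n x \<longrightarrow>
          Fbar a b p n x \<ge> rdown (FI a b p n x) (lam a b p (gray_succ n x)))
    \<and> (\<forall>x\<in>strings n. \<not> gray_smallest n x \<and> \<not> gray_largest n x \<longrightarrow>
          {min (Fbar a b p n (gray_pred n x)) (FIprev a b p n x) ..<
           min (Fbar a b p n x) (FI a b p n x)}
          \<subseteq> {rdown (FIprev a b p n x) (lam a b p x) ..< Fbar a b p n x})"
proof -
  have pF: "p False > 0" and pT: "p True > 0" using assms by auto
  have ba: "b - a > 0" using assms by simp
  have rho1: "rho p \<ge> 1"
  proof (cases "p False \<le> p True")
    case True then have "p True / p False \<ge> 1" using pF by simp
    then show ?thesis unfolding rho_def by linarith
  next
    case False then have "p False / p True \<ge> 1" using pT by simp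
    then show ?thesis unfolding rho_def by linarith
  qed
  have ps: "pstr p x > 0" for x using pstr_pos[OF pF pT] .
  have FIe: "FI a b p n x = FIprev a b p n x + (b - a) * pstr p x" if "x \<in> strings n" for x
    using Fcdf_split[OF that, of p] unfolding FI_def FIprev_def by (simp add: algebra_simps)
  have lb: "rho p * (b - a) * pstr p x \<le> 2 powr (- real_of_int (lam a b p x))" for x
    unfolding lam_def using lam_bound[of "rho p * (b - a) * pstr p x"] rho1 ba ps[of x] by simp
  have qle: "(b - a) * pstr p x \<le> rho p * (b - a) * pstr p x" for x
    using rho1 ba ps[of x] by (simp add: mult_right_mono mult.assoc)
  have strict: "FIprev a b p n x < Fbar a b p n x" for x
    using rdown_gt[of "FIprev a b p n x + 2 powr (- real_of_int (lam a b p x))" "lam a b p x"]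
    unfolding Fbar_def by simp
  have partb: "Fbar a b p n x \<ge> rdown (FI a b p n x) (lam a b p (gray_succ n x))"
    if x: "x \<in> strings n" and nl: "\<not> gray_largest n x" for x
  proof -
    define L where "L = lam a b p x"
    define L' where "L' = lam a b p (gray_succ n x)"
    define y where "y = gray_succ n x"
    have ob: "pstr p x \<le> rho p * pstr p y" using onebit_pstr[OF pF pT succ_onebit[OF x nl]] y_def by simp
    show ?thesis
    proof (cases "L' < L")
      case True
      have "FI a b p n x \<le> FIprev a b p n x + 2 powr (- real_of_int L)"
        using FIe[OF x] qle[of x] lb[of x] L_def by simp
      then have "rdown (FI a b p n x) L' \<le> rdown (FIprev a b p n x + 2 powr (- real_of_int L)) L'"
        by (rule rdown_mono)
      also have "\<dots> \<le> Fbar a b p n x" unfolding Fbar_def L_def[symmetric]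
        using True by (intro rdown_coarse) simp
      finally show ?thesis using L'_def by simp
    next
      case False
      then obtain k where k: "Fbar a b p n x = 2 powr (- real_of_int L') * of_int k"
        using rdown_multiple[of L L'] unfolding Fbar_def L_def[symmetric] by fastforce
      have "(b - a) * pstr p x \<le> (b - a) * (rho p * pstr p y)" using ob ba by simp
      also have "\<dots> = rho p * (b - a) * pstr p y" by simp
      also have "\<dots> \<le> 2 powr (- real_of_int L')" using lb[of y] L'_def y_def by simp
      finally have "FI a b p n x \<le> FIprev a b p n x + 2 powr (- real_of_int L')" using FIe[OF x] by simp
      then have "FI a b p n x < 2 powr (- real_of_int L') * of_int k + 2 powr (- real_of_int L')"
        using strict[of x] k by simp
      then show ?thesis using rdown_grid k L'_def by metis
    qed
  qed
  have partc: "{min (Fbar a b p n (gray_pred n x)) (FIprev a b p n x) ..<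
           min (Fbar a b p n x) (FI a b p n x)}
          \<subseteq> {rdown (FIprev a b p n x) (lam a b p x) ..< Fbar a b p n x}"
    if x: "x \<in> strings n" and ns: "\<not> gray_smallest n x" and nl: "\<not> gray_largest n x" for x
  proof -
    define z where "z = gray_pred n x"
    have z: "z \<in> strings n" "key n z = key n x - 1" using pred_key[OF x ns] z_def by auto
    have k0: "key n x \<noteq> 0" using smallest_key x ns by blast
    have kl: "key n x < 2 ^ n" using key_lt x by blast
    have znl: "\<not> gray_largest n z" using largest_key[OF z(1)] z(2) k0 kl by simp
    have "key n (gray_succ n z) = key n x" using succ_key[OF z(1) znl] z(2) k0 by simp
    then have sz: "gray_succ n z = x" using key_inj succ_key[OF z(1) znl] x by blast
    have "FI a b p n z = FIprev a b p n x" unfolding FI_def FIprev_def Fprev_def z_def using ns by simp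
    then have "rdown (FIprev a b p n x) (lam a b p x) \<le> Fbar a b p n z"
      using partb[OF z(1) znl] sz by simp
    moreover have "rdown (FIprev a b p n x) (lam a b p x) \<le> FIprev a b p n x" by (rule rdown_le)
    ultimately show ?thesis using z_def by auto
  qed
  show ?thesis using strict partb partc by (auto intro: less_imp_le)
qed

end
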